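(* Let $V$ be a $3$-dimensional real Euclidean space, $R\subset V$ a reduced root system spanning $V$ with simple system $S$ and Weyl group $W$, $\Lambda\subset C_S$ finite, and $P=\operatorname{conv}(W(\Lambda))$ a $3$-dimensional $W$-symmetric polytope. If $P$ is simple, then for every $K\subseteq S$ the quotient polytope $P/W_K=P\cap C_K$ is simple.
   Context: $W$ is generated by the reflections in the simple roots, $W_K$ by the reflections in the roots of $K$; $C_K=\{x:\langle x,\alpha\rangle\ge0\ \forall\alpha\in K\}$, and $P/W_K$ is identified with the polytope $P\cap C_K$. No non-degeneracy is assumed. A $3$-dimensional polytope is simple if each vertex lies in exactly $3$ facets. *)

theory Defs
  imports "HOL-Analysis.Analysis"
begin

definition refl_in :: "'a::euclidean_space \<Rightarrow> 'a \<Rightarrow> 'a" where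
  "refl_in a x = x - ((2 * (x \<bullet> a)) / (a \<bullet> a)) *\<^sub>R a"

definition reduced_root_system :: "'a::euclidean_space set \<Rightarrow> bool" where
  "reduced_root_system R \<longleftrightarrow>
     finite R \<and> 0 \<notin> R \<and> span R = UNIV \<and>
     (\<forall>a\<in>R. \<forall>b\<in>R. refl_in a b \<in> R) \<and>
     (\<forall>a\<in>R. \<forall>b\<in>R. 2 * (b \<bullet> a) / (a \<bullet> a) \<in> \<int>) \<and>
     (\<forall>a\<in>R. \<forall>c::real. c *\<^sub>R a \<in> R \<longrightarrow> c = 1 \<or> c = -1)"

definition simple_system :: "'a::euclidean_space set \<Rightarrow> 'a set \<Rightarrow> bool" where
  "simple_system R S \<longleftrightarrow>
     S \<subseteq> R \<and> independent S \<and>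
     (\<forall>b\<in>R. \<exists>c. b = (\<Sum>a\<in>S. c a *\<^sub>R a) \<and>
        ((\<forall>a\<in>S. c a \<ge> 0) \<or> (\<forall>a\<in>S. c a \<le> 0)))"

text \<open>The group generated by the reflections in the vectors of K (for finite
  reflection groups the generated monoid coincides with the generated group).\<close>
inductive_set refl_group :: "'a::euclidean_space set \<Rightarrow> ('a \<Rightarrow> 'a) set"
  for K :: "'a set" where
  id: "id \<in> refl_group K"
| step: "w \<in> refl_group K \<Longrightarrow> a \<in> K \<Longrightarrow> refl_in a \<circ> w \<in> refl_group K"

definition chamber :: "'a::euclidean_space set \<Rightarrow> 'a set" where
  "chamber K = {x. \<forall>a\<in>K. x \<bullet> a \<ge> 0}"

definition simple_polytope3 :: "'a::euclidean_space set \<Rightarrow> bool" where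
  "simple_polytope3 P \<longleftrightarrow> polytope P \<and> aff_dim P = 3 \<and>
     (\<forall>v. v extreme_point_of P \<longrightarrow> card {F. F facet_of P \<and> v \<in> F} = 3)"

end

theory Submission
  imports Defs
begin

lemma refl_in_inner_sym: "refl_in a x \<bullet> y = x \<bullet> refl_in a y"
  unfolding refl_in_def by (simp add: algebra_simps inner_commute)

lemma refl_in_invol: "a \<noteq> 0 \<Longrightarrow> refl_in a (refl_in a x) = x"
  unfolding refl_in_def
  by (simp add: algebra_simps divide_simps inner_commute)

lemma linear_refl_in: "linear (refl_in a)"
  unfolding linear_iff refl_in_def
  by (auto simp: inner_add_left algebra_simps add_divide_distrib scaleR_add_left diff_divide_distrib)

lemma inj_refl_in: "a \<noteq> 0 \<Longrightarrow> inj (refl_in a)"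
  by (metis injI refl_in_invol)

lemma refl_in_norm: "a \<noteq> 0 \<Longrightarrow> norm (refl_in a x) = norm x"
proof -
  assume a: "a \<noteq> 0"
  have "refl_in a x \<bullet> refl_in a x = x \<bullet> x"
    by (simp add: refl_in_inner_sym refl_in_invol a)
  then show ?thesis by (simp add: norm_eq_sqrt_inner)
qed

lemma refl_in_fix_iff: "a \<noteq> 0 \<Longrightarrow> refl_in a x = x \<longleftrightarrow> x \<bullet> a = 0"
  unfolding refl_in_def by auto

lemma refl_in_eq: "refl_in a x = x - ((2 * (x \<bullet> a)) / (a \<bullet> a)) *\<^sub>R a"
  by (simp add: refl_in_def)

lemma refl_in_image_eq:
  assumes "a \<noteq> 0" "\<And>x. x \<in> P \<Longrightarrow> refl_in a x \<in> P"
  shows "refl_in a ` P = P"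
  using assms by (auto simp: image_iff) (metis refl_in_invol)

lemma dual_exists:
  fixes G :: "'a::euclidean_space set"
  assumes "independent G"
  shows "\<exists>y. \<forall>g\<in>G. g \<bullet> y = c g"
proof -
  obtain f :: "'a \<Rightarrow> real" where f: "linear f" "\<forall>x\<in>G. f x = c x"
    using linear_independent_extend[OF assms] by blast
  define y where "y = (\<Sum>b\<in>Basis. f b *\<^sub>R b)"
  have "g \<bullet> y = f g" for g
  proof -
    have "g \<bullet> y = (\<Sum>b\<in>Basis. f b * (g \<bullet> b))"
      by (simp add: y_def inner_sum_right)
    also have "\<dots> = f (\<Sum>b\<in>Basis. (g \<bullet> b) *\<^sub>R b)"
      by (simp add: linear_sum[OF f(1)] linear_scale[OF f(1)] mult.commute)
    also have "\<dots> = f g" by (simp add: euclidean_representation)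
    finally show ?thesis .
  qed
  then show ?thesis using f by (intro exI[of _ y]) auto
qed

lemma aff_dim_dual_pts:
  fixes w :: "'a::euclidean_space \<Rightarrow> 'a"
  assumes "finite G'" "t \<noteq> 0" and w: "\<forall>g0\<in>G'. \<forall>g\<in>G'. g \<bullet> w g0 = (if g = g0 then -1 else 0)"
  shows "aff_dim (insert v ((\<lambda>g. v + t *\<^sub>R w g) ` G')) = int (card G')"
proof -
  have inj: "inj_on (\<lambda>g. v + t *\<^sub>R w g) G'"
  proof (rule inj_onI)
    fix g g' assume g: "g \<in> G'" "g' \<in> G'" and eq: "v + t *\<^sub>R w g = v + t *\<^sub>R w g'"
    then have "w g = w g'" using \<open>t \<noteq> 0\<close> by simp
    then have "g \<bullet> w g = g \<bullet> w g'" by simp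
    then show "g = g'" using w g by (auto split: if_splits)
  qed
  have notin: "v \<notin> (\<lambda>g. v + t *\<^sub>R w g) ` G'"
  proof
    assume "v \<in> (\<lambda>g. v + t *\<^sub>R w g) ` G'"
    then obtain g where g: "g \<in> G'" "v = v + t *\<^sub>R w g" by auto
    then have "w g = 0" using \<open>t \<noteq> 0\<close> by simp
    then show False using w g by force
  qed
  have img: "(\<lambda>x. -v + x) ` (\<lambda>g. v + t *\<^sub>R w g) ` G' = (\<lambda>g. t *\<^sub>R w g) ` G'"
    by (auto simp: image_iff)
  have indep: "\<not> dependent ((\<lambda>g. t *\<^sub>R w g) ` G')"
    unfolding dependent_def
  proof clarsimp
    fix g0 assume g0: "g0 \<in> G'" and sp: "t *\<^sub>R w g0 \<in> span ((\<lambda>g. t *\<^sub>R w g) ` G' - {t *\<^sub>R w g0})"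
    have "span ((\<lambda>g. t *\<^sub>R w g) ` G' - {t *\<^sub>R w g0}) \<subseteq> {x. g0 \<bullet> x = 0}"
    proof (rule span_minimal)
      show "subspace {x. g0 \<bullet> x = 0}" by (rule subspace_hyperplane)
      show "(\<lambda>g. t *\<^sub>R w g) ` G' - {t *\<^sub>R w g0} \<subseteq> {x. g0 \<bullet> x = 0}"
        using w g0 by auto
    qed
    with sp have "g0 \<bullet> (t *\<^sub>R w g0) = 0" by auto
    then show False using w g0 \<open>t \<noteq> 0\<close> by simp
  qed
  have "\<not> affine_dependent (insert v ((\<lambda>g. v + t *\<^sub>R w g) ` G'))"
    using affine_dependent_iff_dependent[OF notin] img indep by simp
  from aff_dim_affine_independent[OF this]
  have "of_nat (card (insert v ((\<lambda>g. v + t *\<^sub>R w g) ` G'))) = aff_dim (insert v ((\<lambda>g. v + t *\<^sub>R w g) ` G')) + 1" .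
  moreover have "card (insert v ((\<lambda>g. v + t *\<^sub>R w g) ` G')) = card G' + 1"
    using notin inj \<open>finite G'\<close> by (simp add: card_image)
  ultimately show ?thesis by simp
qed

lemma local_three_facets:
  fixes Q :: "'a::euclidean_space set"
  assumes dim3: "DIM('a) = 3" and polyQ: "polyhedron Q" and cvx: "convex Q" and vQ: "v \<in> Q"
    and e: "e > 0" and finG: "finite G" and cardG: "card G \<le> 3" and spG: "span G = UNIV"
    and loc: "\<And>y. y \<in> ball v e \<Longrightarrow> (y \<in> Q \<longleftrightarrow> (\<forall>g\<in>G. g \<bullet> (y - v) \<le> 0))"
  shows "card {F. F facet_of Q \<and> v \<in> F} = 3 \<and> aff_dim Q = 3"
proof -
  have "dim (UNIV::'a set) \<le> card G"
    using span_card_ge_dim[of G UNIV] spG finG by auto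
  then have cG: "card G = 3" using cardG dim3 by simp
  have indG: "independent G"
    using card_eq_dim[of G UNIV] cG dim3 finG spG by simp
  have "\<forall>g0\<in>G. \<exists>y. \<forall>g\<in>G. g \<bullet> y = (if g = g0 then -1 else 0)"
    by (intro ballI dual_exists[OF indG])
  then obtain w where w: "\<forall>g0\<in>G. \<forall>g\<in>G. g \<bullet> w g0 = (if g = g0 then -1 else 0)"
    by metis
  have glob: "g \<bullet> (x - v) \<le> 0" if x: "x \<in> Q" and g: "g \<in> G" for x g
  proof -
    define t where "t = min 1 (e / (2 * (norm (x - v) + 1)))"
    have "0 < 2 * (norm (x - v) + 1)" by (simp add: add_nonneg_pos)
    then have t0: "t > 0" "t \<le> 1" using e by (auto simp: t_def)
    have "t * norm (x - v) \<le> e / (2 * (norm (x - v) + 1)) * norm (x - v)"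
      unfolding t_def by (intro mult_right_mono) auto
    also have "\<dots> < e"
    proof -
      have pos: "0 < 2 * (norm (x - v) + 1)" by (simp add: add_nonneg_pos)
      have "e * norm (x - v) < e * (2 * (norm (x - v) + 1))" using e by (intro mult_strict_left_mono) (auto simp: add_nonneg_pos)
      then show ?thesis using pos by (simp add: field_simps)
    qed
    finally have lt: "t * norm (x - v) < e" .
    define y where "y = (1 - t) *\<^sub>R v + t *\<^sub>R x"
    have "y \<in> Q" using convexD[OF cvx vQ x] t0 by (simp add: y_def)
    moreover have yv: "y - v = t *\<^sub>R (x - v)" by (simp add: y_def algebra_simps)
    moreover have "y \<in> ball v e"
    proof -
      have "norm (y - v) = t * norm (x - v)" using yv t0 by simp
      then have "dist v y < e" using lt by (metis dist_commute dist_norm)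
      then show ?thesis by simp
    qed
    ultimately have "g \<bullet> (t *\<^sub>R (x - v)) \<le> 0" using loc g by auto
    then show ?thesis using t0 by (simp add: mult_le_0_iff)
  qed
  define M where "M = 1 + (\<Sum>g\<in>G. norm (w g))"
  have M1: "M \<ge> 1" by (simp add: M_def sum_nonneg)
  define t where "t = e / (2 * M)"
  have t0: "t > 0" using e M1 by (simp add: t_def)
  define p where "p g = v + t *\<^sub>R w g" for g
  have pball: "p g \<in> ball v e" if "g \<in> G" for g
  proof -
    have "norm (w g) \<le> M"
      using that finG unfolding M_def
      by (smt (verit) member_le_sum norm_ge_zero)
    then have "t * norm (w g) \<le> t * M" using t0 by simp
    also have "\<dots> < e" using e M1 by (simp add: t_def)
    finally show ?thesis using t0 by (simp add: p_def dist_norm)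
  qed
  have pdot: "g \<bullet> (p g0 - v) = (if g = g0 then - t else 0)" if "g \<in> G" "g0 \<in> G" for g g0
    using w that by (simp add: p_def)
  have pQ: "p g \<in> Q" if "g \<in> G" for g
    using loc[OF pball[OF that]] pdot that t0 by auto
  have affd: "aff_dim (insert v (p ` G')) = int (card G')" if "G' \<subseteq> G" for G'
  proof -
    have "\<forall>g0\<in>G'. \<forall>g\<in>G'. g \<bullet> w g0 = (if g = g0 then -1 else 0)" using w that by blast
    moreover have "finite G'" using that finG by (rule finite_subset)
    ultimately show ?thesis unfolding p_def using t0 by (intro aff_dim_dual_pts) auto
  qed
  have "aff_dim (insert v (p ` G)) \<le> aff_dim Q"
    by (rule aff_dim_subset) (use vQ pQ in auto)
  then have affQ: "aff_dim Q = 3"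
    using affd[of G] cG aff_dim_le_DIM[of Q] dim3 by simp
  define F where "F g = Q \<inter> {x. g \<bullet> x = g \<bullet> v}" for g
  have Fface: "F g face_of Q" if "g \<in> G" for g
    unfolding F_def
    by (rule face_of_Int_supporting_hyperplane_le[OF cvx]) (use glob that in \<open>auto simp: inner_diff_right\<close>)
  have pF: "p g' \<in> F g \<longleftrightarrow> g' \<noteq> g" if "g \<in> G" "g' \<in> G" for g g'
  proof -
    have "g \<bullet> p g' = g \<bullet> v + g \<bullet> (p g' - v)" by (simp add: inner_diff_right)
    then show ?thesis using pdot[OF that] pQ[OF that(2)] t0 by (auto simp: F_def)
  qed
  have affF: "aff_dim (F g) = 2" if g: "g \<in> G" for g
  proof -
    have "F g \<noteq> Q" using pF[OF g g] pQ[OF g] by auto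
    then have lt: "aff_dim (F g) < 3"
      using face_of_aff_dim_lt[OF cvx Fface[OF g]] affQ by simp
    have "insert v (p ` (G - {g})) \<subseteq> F g"
      using pF g vQ by (auto simp: F_def)
    then have "aff_dim (insert v (p ` (G - {g}))) \<le> aff_dim (F g)" by (rule aff_dim_subset)
    moreover have "card (G - {g}) = 2" using cG g finG by simp
    ultimately show ?thesis using affd[of "G - {g}"] lt by simp
  qed
  have Ffacet: "F g facet_of Q" if "g \<in> G" for g
    unfolding facet_of_def using Fface[OF that] affF[OF that] affQ vQ by (auto simp: F_def)
  have vF: "v \<in> F g" for g using vQ by (simp add: F_def)
  have allF: "\<exists>g\<in>G. Fc = F g" if Fc: "Fc facet_of Q" "v \<in> Fc" for Fc
  proof -
    obtain a b where ab: "a \<noteq> 0" "Q \<subseteq> {x. a \<bullet> x \<le> b}" "Fc = Q \<inter> {x. a \<bullet> x = b}"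
      using facet_of_polyhedron[OF polyQ Fc(1)] by blast
    have b: "b = a \<bullet> v" using ab Fc(2) by auto
    have "a \<in> span G" using spG by simp
    then obtain l where l: "a = (\<Sum>g\<in>G. l g *\<^sub>R g)"
      using span_finite[OF finG] by auto
    have adot: "a \<bullet> y = (\<Sum>g\<in>G. l g * (g \<bullet> y))" for y
      by (simp add: l inner_sum_left)
    have lnn: "l g0 \<ge> 0" if g0: "g0 \<in> G" for g0
    proof -
      have "a \<bullet> (p g0 - v) = (\<Sum>g\<in>G. l g * (if g = g0 then - t else 0))"
        unfolding adot using pdot g0 by (intro sum.cong) auto
      also have "\<dots> = - t * l g0"
        using g0 finG by (simp add: if_distrib[of "\<lambda>x. l _ * x"] sum.delta' cong: if_cong)
      finally have "a \<bullet> (p g0 - v) = - t * l g0" .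
      moreover have "a \<bullet> (p g0 - v) \<le> 0"
        using ab(2) pQ[OF g0] b by (auto simp: inner_diff_right)
      ultimately show ?thesis using t0 by (simp add: zero_le_mult_iff)
    qed
    have "\<exists>g0\<in>G. l g0 \<noteq> 0"
    proof (rule ccontr)
      assume "\<not> ?thesis"
      then have "a = 0" using l by simp
      then show False using ab by simp
    qed
    then obtain g0 where g0': "g0 \<in> G" "l g0 \<noteq> 0" by blast
    then have g0: "g0 \<in> G" "l g0 > 0" using lnn[OF g0'(1)] by auto
    have sub: "Fc \<subseteq> F g0"
    proof
      fix x assume x: "x \<in> Fc"
      then have xQ: "x \<in> Q" and "a \<bullet> (x - v) = 0" using ab b by (auto simp: inner_diff_right)
      then have "(\<Sum>g\<in>G. - (l g * (g \<bullet> (x - v)))) = 0"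
        by (simp add: adot sum_negf)
      moreover have "\<forall>g\<in>G. 0 \<le> - (l g * (g \<bullet> (x - v)))"
        using lnn glob[OF xQ] by (simp add: mult_nonneg_nonpos)
      ultimately have "\<forall>g\<in>G. - (l g * (g \<bullet> (x - v))) = 0"
        using sum_nonneg_eq_0_iff[OF finG, of "\<lambda>g. - (l g * (g \<bullet> (x - v)))"] by simp
      then have "g0 \<bullet> (x - v) = 0" using g0 by auto
      then show "x \<in> F g0" using xQ by (simp add: F_def inner_diff_right)
    qed
    have "F g0 \<subseteq> Q" by (auto simp: F_def)
    then have "Fc face_of F g0"
      by (rule face_of_subset[OF facet_of_imp_face_of[OF Fc(1)] sub])
    moreover have "aff_dim Fc = 2" using Fc(1) affQ by (simp add: facet_of_def)
    ultimately have "Fc = F g0"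
      using face_of_aff_dim_lt[OF face_of_imp_convex[OF Fface[OF g0(1)]], of Fc] affF[OF g0(1)]
      by (cases "Fc = F g0") auto
    then show ?thesis using g0 by blast
  qed
  have eq: "{Fc. Fc facet_of Q \<and> v \<in> Fc} = F ` G"
  proof
    show "{Fc. Fc facet_of Q \<and> v \<in> Fc} \<subseteq> F ` G" using allF by blast
    show "F ` G \<subseteq> {Fc. Fc facet_of Q \<and> v \<in> Fc}" using Ffacet vF by blast
  qed
  have injF: "inj_on F G"
  proof (rule inj_onI)
    fix g g' assume "g \<in> G" "g' \<in> G" "F g = F g'"
    then show "g = g'" using pF[of g g'] pF[of g' g'] by blast
  qed
  have "card (F ` G) = 3" using card_image[OF injF] cG by simp
  then show ?thesis using eq affQ by simp
qed

definition nrm :: "'a::euclidean_space set \<Rightarrow> 'a \<Rightarrow> 'a set" where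
  "nrm P v = {n. norm n = 1 \<and> (\<forall>x\<in>P. n \<bullet> x \<le> n \<bullet> v) \<and> (P \<inter> {x. n \<bullet> x = n \<bullet> v}) facet_of P}"

lemma poly_local:
  fixes P :: "'a::euclidean_space set"
  assumes polyP: "polyhedron P" and affP: "aff_dim P = DIM('a)" and vP: "v \<in> P"
  shows "\<exists>e>0. \<forall>y\<in>ball v e. (y \<in> P \<longleftrightarrow> (\<forall>n\<in>nrm P v. n \<bullet> (y - v) \<le> 0))"
proof -
  obtain F where finF: "finite F" and seq: "P = affine hull P \<inter> \<Inter>F"
    and faces: "\<And>h. h \<in> F \<Longrightarrow> \<exists>a b. a \<noteq> 0 \<and> h = {x. a \<bullet> x \<le> b}"
    and min: "\<And>F'. F' \<subset> F \<Longrightarrow> P \<subset> (affine hull P) \<inter> \<Inter>F'"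
    using polyP by (simp add: polyhedron_Int_affine_minimal) meson
  then obtain a b where ab: "\<And>h. h \<in> F \<Longrightarrow> a h \<noteq> 0 \<and> h = {x. a h \<bullet> x \<le> b h}"
    by metis
  have hull: "affine hull P = UNIV" using affine_hull_UNIV affP by auto
  have Peq: "P = \<Inter>F" using seq hull by simp
  note fexp = facet_of_polyhedron_explicit[OF finF seq ab min]
  define T where "T = {h\<in>F. a h \<bullet> v = b h}"
  have strict: "a h \<bullet> v < b h" if "h \<in> F - T" for h
  proof -
    have "v \<in> h" using vP Peq that by auto
    then have "a h \<bullet> v \<le> b h" using ab that by auto
    then show ?thesis using that by (auto simp: T_def)
  qed
  define e where "e = Min (insert 1 ((\<lambda>h. (b h - a h \<bullet> v) / norm (a h)) ` (F - T)))"
  have e0: "e > 0"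
    unfolding e_def using finF strict ab by (auto simp: Min_gr_iff)
  have ele: "e \<le> (b h - a h \<bullet> v) / norm (a h)" if "h \<in> F - T" for h
    unfolding e_def using finF that by (intro Min_le) auto
  have "\<forall>y\<in>ball v e. (y \<in> P \<longleftrightarrow> (\<forall>n\<in>nrm P v. n \<bullet> (y - v) \<le> 0))"
  proof (intro ballI, rule iffI)
    fix y assume "y \<in> ball v e" "y \<in> P"
    then show "\<forall>n\<in>nrm P v. n \<bullet> (y - v) \<le> 0" by (auto simp: nrm_def inner_diff_right)
  next
    fix y assume y: "y \<in> ball v e" and ny: "\<forall>n\<in>nrm P v. n \<bullet> (y - v) \<le> 0"
    have "y \<in> h" if h: "h \<in> F" for h
    proof (cases "h \<in> T")
      case True
      define n where "n = (1 / norm (a h)) *\<^sub>R a h"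
      have anz: "a h \<noteq> 0" using ab[OF h] by auto
      have ndot: "n \<bullet> x = (a h \<bullet> x) / norm (a h)" for x by (simp add: n_def)
      have bh: "b h = a h \<bullet> v" using True by (simp add: T_def)
      have "n \<in> nrm P v"
      proof -
        have "norm n = 1" using anz by (simp add: n_def)
        moreover have "\<forall>x\<in>P. n \<bullet> x \<le> n \<bullet> v"
        proof
          fix x assume "x \<in> P"
          then have "x \<in> h" using Peq h by auto
          then have "a h \<bullet> x \<le> a h \<bullet> v" using ab[OF h] bh by auto
          then show "n \<bullet> x \<le> n \<bullet> v" unfolding ndot using anz by (simp add: divide_right_mono)
        qed
        moreover have "P \<inter> {x. n \<bullet> x = n \<bullet> v} = P \<inter> {x. a h \<bullet> x = b h}"
          unfolding ndot bh using anz by auto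
        moreover have "(P \<inter> {x. a h \<bullet> x = b h}) facet_of P" using fexp h by blast
        ultimately show ?thesis by (simp add: nrm_def)
      qed
      then have "n \<bullet> (y - v) \<le> 0" using ny by blast
      then have "a h \<bullet> (y - v) \<le> 0" using anz
        by (simp add: n_def divide_le_0_iff)
      then have "a h \<bullet> y \<le> b h" using bh by (simp add: inner_diff_right)
      then show "y \<in> h" by (subst conjunct2[OF ab[OF h]]) simp
    next
      case False
      then have hT: "h \<in> F - T" using h by simp
      have "a h \<bullet> (y - v) \<le> norm (a h) * norm (y - v)" by (rule norm_cauchy_schwarz[THEN order_trans]) simp
      also have "\<dots> \<le> norm (a h) * e"
        using y by (intro mult_left_mono) (auto simp: dist_norm norm_minus_commute)
      also have "\<dots> \<le> b h - a h \<bullet> v"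
        using ele[OF hT] ab[OF h] by (simp add: field_simps)
      finally have "a h \<bullet> y \<le> b h" by (simp add: inner_diff_right)
      then show "y \<in> h" by (subst conjunct2[OF ab[OF h]]) simp
    qed
    then show "y \<in> P" using Peq by auto
  qed
  then show ?thesis using e0 by blast
qed

lemma nrm_unique:
  fixes P :: "'a::euclidean_space set"
  assumes affP: "aff_dim P = DIM('a)" and n: "n \<in> nrm P v" and n': "n' \<in> nrm P v"
    and eq: "P \<inter> {x. n \<bullet> x = n \<bullet> v} = P \<inter> {x. n' \<bullet> x = n' \<bullet> v}"
  shows "n = n'"
proof -
  define Fc where "Fc = P \<inter> {x. n \<bullet> x = n \<bullet> v}"
  have fac: "Fc facet_of P" using n by (simp add: nrm_def Fc_def)
  have nn: "norm n = 1" "norm n' = 1" using n n' by (auto simp: nrm_def)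
  then have nz: "n \<noteq> 0" "n' \<noteq> 0" by auto
  have affFc: "aff_dim Fc = DIM('a) - 1" "Fc \<noteq> {}" using fac affP by (auto simp: facet_of_def)
  have hyp: "affine hull Fc = {x. m \<bullet> x = m \<bullet> v}"
    if "Fc \<subseteq> {x. m \<bullet> x = m \<bullet> v}" "m \<noteq> 0" for m
  proof (rule affine_dim_equal)
    show "affine (affine hull Fc)" by simp
    show "affine {x. m \<bullet> x = m \<bullet> v}" by (rule affine_hyperplane)
    show "affine hull Fc \<noteq> {}" using affFc by simp
    show "affine hull Fc \<subseteq> {x. m \<bullet> x = m \<bullet> v}"
      using that(1) by (intro hull_minimal) (auto simp: affine_hyperplane)
    show "aff_dim (affine hull Fc) = aff_dim {x. m \<bullet> x = m \<bullet> v}"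
      using affFc that(2) by simp
  qed
  have H: "{x. n \<bullet> x = n \<bullet> v} = {x. n' \<bullet> x = n' \<bullet> v}"
    using hyp[of n] hyp[of n'] nz eq by (auto simp: Fc_def)
  have perp: "n' \<bullet> d = 0" if "n \<bullet> d = 0" for d
  proof -
    have "v + d \<in> {x. n \<bullet> x = n \<bullet> v}" using that by (simp add: inner_add_right)
    then have "n' \<bullet> (v + d) = n' \<bullet> v" using H by auto
    then show ?thesis by (simp add: inner_add_right)
  qed
  define k where "k = n' \<bullet> n"
  define d where "d = n' - k *\<^sub>R n"
  have nn1: "n \<bullet> n = 1" "n' \<bullet> n' = 1" using nn by (simp_all add: dot_square_norm)
  have "n \<bullet> d = 0" using nn1 by (simp add: d_def k_def inner_diff_right inner_commute)
  then have "n' \<bullet> d = 0" by (rule perp)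
  then have "d \<bullet> d = 0" using \<open>n \<bullet> d = 0\<close> by (simp add: d_def inner_diff_left)
  then have n'eq: "n' = k *\<^sub>R n" by (simp add: d_def)
  then have "k * k = 1" using nn1 by (simp add: algebra_simps)
  then have "k = 1 \<or> k = -1" by (metis abs_of_nonneg abs_of_nonpos abs_mult_self_eq mult_cancel_left1 mult_minus_right  neg_equal_iff_equal square_eq_1_iff)
  moreover have "k \<noteq> -1"
  proof
    assume "k = -1"
    then have n'm: "n' = - n" using n'eq by simp
    have "P \<subseteq> {x. n \<bullet> x = n \<bullet> v}"
    proof
      fix x assume x: "x \<in> P"
      have "n \<bullet> x \<le> n \<bullet> v" using n x by (auto simp: nrm_def)
      moreover have "n' \<bullet> x \<le> n' \<bullet> v" using n' x by (auto simp: nrm_def)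
      ultimately show "x \<in> {x. n \<bullet> x = n \<bullet> v}" using n'm by simp
    qed
    then have "aff_dim P \<le> aff_dim {x. n \<bullet> x = n \<bullet> v}" by (rule aff_dim_subset)
    then show False using affP nz by simp
  qed
  ultimately show ?thesis using n'eq by simp
qed

lemma nrm_card:
  fixes P :: "'a::euclidean_space set"
  assumes polyP: "polytope P" and affP: "aff_dim P = DIM('a)" and vP: "v \<in> P"
  shows "finite (nrm P v) \<and> card (nrm P v) = card {F. F facet_of P \<and> v \<in> F}"
proof -
  define f where "f n = P \<inter> {x. n \<bullet> x = n \<bullet> v}" for n
  have bij: "bij_betw f (nrm P v) {F. F facet_of P \<and> v \<in> F}"
  proof (rule bij_betw_imageI)
    show "inj_on f (nrm P v)"
      by (rule inj_onI) (use nrm_unique[OF affP] in \<open>auto simp: f_def\<close>)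
    show "f ` nrm P v = {F. F facet_of P \<and> v \<in> F}"
    proof
      show "f ` nrm P v \<subseteq> {F. F facet_of P \<and> v \<in> F}"
        using vP by (auto simp: f_def nrm_def)
    next
      show "{F. F facet_of P \<and> v \<in> F} \<subseteq> f ` nrm P v"
      proof clarify
        fix Fc assume Fc: "Fc facet_of P" "v \<in> Fc"
        obtain a b where ab: "a \<noteq> 0" "P \<subseteq> {x. a \<bullet> x \<le> b}" "Fc = P \<inter> {x. a \<bullet> x = b}"
          using facet_of_polyhedron[OF polytope_imp_polyhedron[OF polyP] Fc(1)] by blast
        have b: "b = a \<bullet> v" using ab Fc(2) by auto
        define n where "n = (1 / norm a) *\<^sub>R a"
        have ndot: "n \<bullet> x = (a \<bullet> x) / norm a" for x by (simp add: n_def)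
        have fn: "f n = Fc" unfolding f_def ab(3) ndot b using ab(1) by auto
        have "n \<in> nrm P v"
          unfolding nrm_def using ab(1,2) Fc(1) fn[unfolded f_def] b
          by (auto simp: ndot n_def divide_right_mono)
        then show "Fc \<in> f ` nrm P v" using fn by blast
      qed
    qed
  qed
  have "finite {F. F facet_of P \<and> v \<in> F}"
    using finite_polytope_faces[OF polyP] by (rule finite_subset[rotated]) (auto simp: facet_of_def)
  then show ?thesis using bij bij_betw_finite bij_betw_same_card by blast
qed

lemma ext_span:
  fixes Q :: "'a::euclidean_space set"
  assumes ext: "v extreme_point_of Q" and e: "e > 0"
    and loc: "\<forall>y\<in>ball v e. (y \<in> Q \<longleftrightarrow> (\<forall>m\<in>M. m \<bullet> (y - v) \<le> 0))"
  shows "span M = UNIV"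
proof (rule ccontr)
  assume "span M \<noteq> UNIV"
  then obtain a where a: "a \<noteq> 0" "\<forall>x\<in>span M. a \<bullet> x = 0"
    using span_not_UNIV_orthogonal by blast
  define d where "d = (e / (2 * norm a)) *\<^sub>R a"
  have nd: "norm d = e / 2" using a e by (simp add: d_def)
  have dz: "d \<noteq> 0" using nd e by auto
  have md: "m \<bullet> d = 0" if "m \<in> M" for m
  proof -
    have "a \<bullet> m = 0" using a(2) span_base[OF that] by blast
    then show ?thesis by (simp add: d_def inner_commute)
  qed
  have b1: "v + d \<in> ball v e" "v - d \<in> ball v e" using nd e by (auto simp: dist_norm)
  have c1: "\<forall>m\<in>M. m \<bullet> ((v + d) - v) \<le> 0" "\<forall>m\<in>M. m \<bullet> ((v - d) - v) \<le> 0"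
    using md by (auto simp: inner_diff_right)
  have "v + d \<in> Q" using loc b1(1) c1(1) by blast
  moreover have "v - d \<in> Q" using loc b1(2) c1(2) by blast
  moreover have "v \<in> open_segment (v - d) (v + d)"
  proof -
    have "(v - d) + (v + d) = 2 *\<^sub>R v" by (simp add: scaleR_2)
    then have "midpoint (v - d) (v + d) = v" by (simp add: midpoint_def)
    moreover have "v - d \<noteq> v + d"
    proof
      assume "v - d = v + d"
      then have "(v + d) - (v - d) = 0" by simp
      moreover have "(v + d) - (v - d) = 2 *\<^sub>R d" by (simp add: scaleR_2 algebra_simps)
      ultimately show False using dz by simp
    qed
    ultimately show ?thesis using midpoint_in_open_segment by metis
  qed
  ultimately show False using ext unfolding extreme_point_of_def by blast
qed

lemma nrm_indep:
  fixes P :: "'a::euclidean_space set"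
  assumes dim3: "DIM('a) = 3" and polyP: "polytope P" and affP: "aff_dim P = DIM('a)"
    and simp: "\<And>u. u extreme_point_of P \<Longrightarrow> card {F. F facet_of P \<and> u \<in> F} = 3"
    and vP: "v \<in> P"
  shows "independent (nrm P v)"
proof -
  have finN: "finite (nrm P v)" using nrm_card[OF polyP affP vP] by blast
  define s where "s = (\<Sum>n\<in>nrm P v. n)"
  define Gv where "Gv = P \<inter> {x. s \<bullet> x = s \<bullet> v}"
  have le: "n \<bullet> x \<le> n \<bullet> v" if "x \<in> P" "n \<in> nrm P v" for x n
    using that by (auto simp: nrm_def)
  have sdot: "s \<bullet> y = (\<Sum>n\<in>nrm P v. n \<bullet> y)" for y by (simp add: s_def inner_sum_left)
  have face: "Gv face_of P"
    unfolding Gv_def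
  proof (rule face_of_Int_supporting_hyperplane_le)
    show "convex P" using polyP by (rule polytope_imp_convex)
    show "s \<bullet> x \<le> s \<bullet> v" if "x \<in> P" for x
      unfolding sdot by (rule sum_mono) (use le that in auto)
  qed
  have Gv_all: "n \<bullet> x = n \<bullet> v" if "x \<in> Gv" "n \<in> nrm P v" for x n
  proof -
    have xP: "x \<in> P" and "s \<bullet> x = s \<bullet> v" using that by (auto simp: Gv_def)
    then have "(\<Sum>m\<in>nrm P v. m \<bullet> v - m \<bullet> x) = 0" by (simp add: sdot sum_subtractf)
    moreover have "\<forall>m\<in>nrm P v. 0 \<le> m \<bullet> v - m \<bullet> x" using le[OF xP] by auto
    ultimately have "\<forall>m\<in>nrm P v. m \<bullet> v - m \<bullet> x = 0"
      using sum_nonneg_eq_0_iff[OF finN, of "\<lambda>m. m \<bullet> v - m \<bullet> x"] by simp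
    then show ?thesis using that(2) by simp
  qed
  have "compact Gv" using face_of_polytope_polytope[OF polyP face] polytope_imp_compact by blast
  moreover have "convex Gv" using face face_of_imp_convex by blast
  moreover have "Gv \<noteq> {}" using vP by (auto simp: Gv_def)
  ultimately obtain u where u: "u extreme_point_of Gv" using extreme_point_exists_convex by blast
  then have uP: "u extreme_point_of P" and uG: "u \<in> Gv"
    using extreme_point_of_face[OF face] by auto
  have uPP: "u \<in> P" using uG by (simp add: Gv_def)
  have sub: "nrm P v \<subseteq> nrm P u"
  proof
    fix n assume n: "n \<in> nrm P v"
    have "n \<bullet> u = n \<bullet> v" using Gv_all[OF uG n] .
    then show "n \<in> nrm P u" using n by (simp add: nrm_def)
  qed
  have cu: "card (nrm P u) = 3" "finite (nrm P u)"
    using nrm_card[OF polyP affP uPP] simp[OF uP] by auto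
  obtain e where e: "e > 0" "\<forall>y\<in>ball u e. (y \<in> P \<longleftrightarrow> (\<forall>n\<in>nrm P u. n \<bullet> (y - u) \<le> 0))"
    using poly_local[OF polytope_imp_polyhedron[OF polyP] affP uPP] by blast
  have "span (nrm P u) = UNIV" by (rule ext_span[OF uP e(1) e(2)])
  then have "independent (nrm P u)"
    using card_eq_dim[of "nrm P u" UNIV] cu dim3 by simp
  then show ?thesis using sub independent_mono by blast
qed

lemma nrm_refl:
  fixes P :: "'a::euclidean_space set"
  assumes a: "a \<noteq> 0" and inv: "\<And>x. x \<in> P \<Longrightarrow> refl_in a x \<in> P"
    and vP: "v \<in> P" and va: "v \<bullet> a = 0"
  shows "refl_in a ` nrm P v = nrm P v"
proof -
  let ?s = "refl_in a"
  have sv: "?s v = v" using refl_in_fix_iff[OF a] va by simp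
  have imgP: "?s ` P = P" by (rule refl_in_image_eq[OF a inv])
  have memP: "?s x \<in> P \<longleftrightarrow> x \<in> P" for x
    using inv refl_in_invol[OF a] by metis
  have step: "?s n \<in> nrm P v" if n: "n \<in> nrm P v" for n
  proof -
    have "norm (?s n) = 1" using n refl_in_norm[OF a] by (simp add: nrm_def)
    moreover have "\<forall>x\<in>P. ?s n \<bullet> x \<le> ?s n \<bullet> v"
    proof
      fix x assume "x \<in> P"
      then have "n \<bullet> ?s x \<le> n \<bullet> v" using n inv by (simp add: nrm_def)
      then show "?s n \<bullet> x \<le> ?s n \<bullet> v" using sv by (simp add: refl_in_inner_sym)
    qed
    moreover have "(P \<inter> {x. ?s n \<bullet> x = ?s n \<bullet> v}) facet_of P"
    proof -
      have fac: "(P \<inter> {x. n \<bullet> x = n \<bullet> v}) facet_of P" using n by (simp add: nrm_def)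
      have eq: "P \<inter> {x. ?s n \<bullet> x = ?s n \<bullet> v} = ?s ` (P \<inter> {x. n \<bullet> x = n \<bullet> v})"
      proof
        show "P \<inter> {x. ?s n \<bullet> x = ?s n \<bullet> v} \<subseteq> ?s ` (P \<inter> {x. n \<bullet> x = n \<bullet> v})"
        proof
          fix x assume x: "x \<in> P \<inter> {x. ?s n \<bullet> x = ?s n \<bullet> v}"
          have "?s x \<in> P \<inter> {x. n \<bullet> x = n \<bullet> v}"
            using x memP sv by (simp add: refl_in_inner_sym)
          moreover have "x = ?s (?s x)" using refl_in_invol[OF a] by simp
          ultimately show "x \<in> ?s ` (P \<inter> {x. n \<bullet> x = n \<bullet> v})" by blast
        qed
        show "?s ` (P \<inter> {x. n \<bullet> x = n \<bullet> v}) \<subseteq> P \<inter> {x. ?s n \<bullet> x = ?s n \<bullet> v}"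
        proof
          fix y assume "y \<in> ?s ` (P \<inter> {x. n \<bullet> x = n \<bullet> v})"
          then obtain x where x: "x \<in> P" "n \<bullet> x = n \<bullet> v" "y = ?s x" by blast
          have "?s n \<bullet> y = n \<bullet> x" using x(3) refl_in_invol[OF a] by (simp add: refl_in_inner_sym)
          moreover have "?s n \<bullet> v = n \<bullet> v" using sv by (simp add: refl_in_inner_sym)
          ultimately show "y \<in> P \<inter> {x. ?s n \<bullet> x = ?s n \<bullet> v}" using x inv by auto
        qed
      qed
      have lin: "linear ?s" "inj ?s" using linear_refl_in inj_refl_in[OF a] by auto
      have "(?s ` (P \<inter> {x. n \<bullet> x = n \<bullet> v})) face_of (?s ` P)"
        using face_of_linear_image[OF lin] fac by (simp add: facet_of_def)
      moreover have "aff_dim (?s ` (P \<inter> {x. n \<bullet> x = n \<bullet> v})) = aff_dim (P \<inter> {x. n \<bullet> x = n \<bullet> v})"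
        using aff_dim_injective_linear_image[OF lin] by blast
      ultimately show ?thesis using fac imgP eq by (simp add: facet_of_def)
    qed
    ultimately show ?thesis by (simp add: nrm_def)
  qed
  show ?thesis
  proof
    show "?s ` nrm P v \<subseteq> nrm P v" using step by blast
    show "nrm P v \<subseteq> ?s ` nrm P v"
    proof
      fix n assume "n \<in> nrm P v"
      then have "?s n \<in> nrm P v" "n = ?s (?s n)" using step refl_in_invol[OF a] by auto
      then show "n \<in> ?s ` nrm P v" by blast
    qed
  qed
qed

lemma refl_swap:
  assumes "a \<noteq> 0" "refl_in a n = m" "n \<noteq> m"
  shows "\<exists>c. c \<noteq> 0 \<and> m = n - c *\<^sub>R a"
proof -
  have "m = n - ((2 * (n \<bullet> a)) / (a \<bullet> a)) *\<^sub>R a" using assms(2) by (simp add: refl_in_eq)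
  moreover have "(2 * (n \<bullet> a)) / (a \<bullet> a) \<noteq> 0"
  proof
    assume "(2 * (n \<bullet> a)) / (a \<bullet> a) = 0"
    then have "m = n" using \<open>m = _\<close> by simp
    then show False using assms(3) by simp
  qed
  ultimately show ?thesis by blast
qed

lemma AL_finish:
  assumes "finite G" "card G \<le> 3" "N \<union> uminus ` J \<subseteq> span G" "span (N \<union> uminus ` J) = UNIV"
    "\<forall>y. (\<forall>g\<in>G. g \<bullet> y \<le> 0) \<longleftrightarrow> ((\<forall>n\<in>N. n \<bullet> y \<le> 0) \<and> (\<forall>a\<in>J. a \<bullet> y \<ge> 0))"
  shows "\<exists>G. finite G \<and> card G \<le> 3 \<and> span G = UNIV \<and>
    (\<forall>y. (\<forall>g\<in>G. g \<bullet> y \<le> 0) \<longleftrightarrow> ((\<forall>n\<in>N. n \<bullet> y \<le> 0) \<and> (\<forall>a\<in>J. a \<bullet> y \<ge> (0::real))))"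
proof -
  have "span (N \<union> uminus ` J) \<subseteq> span G"
    using assms(3) by (simp add: span_minimal)
  then have "span G = UNIV" using assms(4) by auto
  then show ?thesis using assms by blast
qed

lemma card3_le: "card {a, b, c} \<le> 3"
  by (auto simp: card_insert_if)

lemma drop_le:
  fixes m d a y :: "'a::euclidean_space"
  assumes "d = m - c *\<^sub>R a" "c \<ge> 0" "m \<bullet> y \<le> 0" "a \<bullet> y \<ge> 0"
  shows "d \<bullet> y \<le> 0"
proof -
  have "d \<bullet> y = m \<bullet> y - c * (a \<bullet> y)" using assms(1) by (simp add: inner_diff_left)
  moreover have "c * (a \<bullet> y) \<ge> 0" using assms(2,4) by simp
  ultimately show ?thesis using assms(3) by linarith
qed

lemma core_J1N3:
  fixes n1 n2 n3 \<alpha> :: "'a::euclidean_space"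
  assumes "n2 = n1 - c *\<^sub>R \<alpha>" "c \<noteq> 0"
  shows "\<exists>G. finite G \<and> card G \<le> 3 \<and> {n1,n2,n3} \<union> uminus ` {\<alpha>} \<subseteq> span G \<and>
    (\<forall>y. (\<forall>g\<in>G. g \<bullet> y \<le> 0) \<longleftrightarrow> ((\<forall>n\<in>{n1,n2,n3}. n \<bullet> y \<le> 0) \<and> (\<forall>a\<in>{\<alpha>}. a \<bullet> y \<ge> 0)))"
proof (cases "c > 0")
  case True
  let ?G = "{n1, n3, -\<alpha>}"
  have "n2 \<in> span ?G"
  proof -
    have "n1 + c *\<^sub>R (-\<alpha>) \<in> span ?G" by (intro span_add span_scale span_base) auto
    then show ?thesis using assms by simp
  qed
  then have sp: "{n1,n2,n3} \<union> uminus ` {\<alpha>} \<subseteq> span ?G" by (auto intro: span_base)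
  have eq: "(\<forall>g\<in>?G. g \<bullet> y \<le> 0) \<longleftrightarrow> ((\<forall>n\<in>{n1,n2,n3}. n \<bullet> y \<le> 0) \<and> (\<forall>a\<in>{\<alpha>}. a \<bullet> y \<ge> 0))" for y
  proof -
    have "n1 \<bullet> y \<le> 0 \<Longrightarrow> \<alpha> \<bullet> y \<ge> 0 \<Longrightarrow> n2 \<bullet> y \<le> 0"
      using drop_le[OF assms(1)] True by simp
    then show ?thesis by auto
  qed
  show ?thesis by (rule exI[of _ ?G], intro conjI allI, simp, rule card3_le, rule sp, rule eq)
next
  case False
  then have c: "-c > 0" using assms(2) by simp
  have n1: "n1 = n2 - (-c) *\<^sub>R \<alpha>" using assms(1) by simp
  let ?G = "{n2, n3, -\<alpha>}"
  have "n1 \<in> span ?G"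
  proof -
    have "n2 + (-c) *\<^sub>R (-\<alpha>) \<in> span ?G" by (intro span_add span_scale span_base) auto
    then show ?thesis using n1 by simp
  qed
  then have sp: "{n1,n2,n3} \<union> uminus ` {\<alpha>} \<subseteq> span ?G" by (auto intro: span_base)
  have eq: "(\<forall>g\<in>?G. g \<bullet> y \<le> 0) \<longleftrightarrow> ((\<forall>n\<in>{n1,n2,n3}. n \<bullet> y \<le> 0) \<and> (\<forall>a\<in>{\<alpha>}. a \<bullet> y \<ge> 0))" for y
  proof -
    have "n2 \<bullet> y \<le> 0 \<Longrightarrow> \<alpha> \<bullet> y \<ge> 0 \<Longrightarrow> n1 \<bullet> y \<le> 0"
      using drop_le[OF n1] c by simp
    then show ?thesis by auto
  qed
  show ?thesis by (rule exI[of _ ?G], intro conjI allI, simp, rule card3_le, rule sp, rule eq)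
qed

lemma core_J2N2:
  fixes n1 n2 \<alpha> \<beta> :: "'a::euclidean_space"
  assumes "n2 = n1 - c *\<^sub>R \<alpha>" "c \<noteq> 0"
  shows "\<exists>G. finite G \<and> card G \<le> 3 \<and> {n1,n2} \<union> uminus ` {\<alpha>,\<beta>} \<subseteq> span G \<and>
    (\<forall>y. (\<forall>g\<in>G. g \<bullet> y \<le> 0) \<longleftrightarrow> ((\<forall>n\<in>{n1,n2}. n \<bullet> y \<le> 0) \<and> (\<forall>a\<in>{\<alpha>,\<beta>}. a \<bullet> y \<ge> 0)))"
proof (cases "c > 0")
  case True
  let ?G = "{n1, -\<alpha>, -\<beta>}"
  have "n2 \<in> span ?G"
  proof -
    have "n1 + c *\<^sub>R (-\<alpha>) \<in> span ?G" by (intro span_add span_scale span_base) auto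
    then show ?thesis using assms by simp
  qed
  then have sp: "{n1,n2} \<union> uminus ` {\<alpha>,\<beta>} \<subseteq> span ?G" by (auto intro: span_base)
  have eq: "(\<forall>g\<in>?G. g \<bullet> y \<le> 0) \<longleftrightarrow> ((\<forall>n\<in>{n1,n2}. n \<bullet> y \<le> 0) \<and> (\<forall>a\<in>{\<alpha>,\<beta>}. a \<bullet> y \<ge> 0))" for y
  proof -
    have "n1 \<bullet> y \<le> 0 \<Longrightarrow> \<alpha> \<bullet> y \<ge> 0 \<Longrightarrow> n2 \<bullet> y \<le> 0"
      using drop_le[OF assms(1)] True by simp
    then show ?thesis by auto
  qed
  show ?thesis by (rule exI[of _ ?G], intro conjI allI, simp, rule card3_le, rule sp, rule eq)
next
  case False
  then have c: "-c > 0" using assms(2) by simp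
  have n1: "n1 = n2 - (-c) *\<^sub>R \<alpha>" using assms(1) by simp
  let ?G = "{n2, -\<alpha>, -\<beta>}"
  have "n1 \<in> span ?G"
  proof -
    have "n2 + (-c) *\<^sub>R (-\<alpha>) \<in> span ?G" by (intro span_add span_scale span_base) auto
    then show ?thesis using n1 by simp
  qed
  then have sp: "{n1,n2} \<union> uminus ` {\<alpha>,\<beta>} \<subseteq> span ?G" by (auto intro: span_base)
  have eq: "(\<forall>g\<in>?G. g \<bullet> y \<le> 0) \<longleftrightarrow> ((\<forall>n\<in>{n1,n2}. n \<bullet> y \<le> 0) \<and> (\<forall>a\<in>{\<alpha>,\<beta>}. a \<bullet> y \<ge> 0))" for y
  proof -
    have "n2 \<bullet> y \<le> 0 \<Longrightarrow> \<alpha> \<bullet> y \<ge> 0 \<Longrightarrow> n1 \<bullet> y \<le> 0"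
      using drop_le[OF n1] c by simp
    then show ?thesis by auto
  qed
  show ?thesis by (rule exI[of _ ?G], intro conjI allI, simp, rule card3_le, rule sp, rule eq)
qed

lemma core_J2N3:
  fixes n1 n2 n3 \<alpha> \<beta> :: "'a::euclidean_space"
  assumes n2: "n2 = n1 - c *\<^sub>R \<alpha>" and c: "c \<noteq> 0" and n3: "n3 = n2 - d *\<^sub>R \<beta>" and d: "d \<noteq> 0"
    and n3a: "n3 \<bullet> \<alpha> = 0" and n1b: "n1 \<bullet> \<beta> = 0"
    and unit: "norm n1 = 1" "norm n2 = 1" "norm n3 = 1" and ne: "n1 \<noteq> n2"
    and obt: "\<alpha> \<bullet> \<beta> \<le> 0"
  shows "\<exists>G. finite G \<and> card G \<le> 3 \<and> {n1,n2,n3} \<union> uminus ` {\<alpha>,\<beta>} \<subseteq> span G \<and>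
    (\<forall>y. (\<forall>g\<in>G. g \<bullet> y \<le> 0) \<longleftrightarrow> ((\<forall>n\<in>{n1,n2,n3}. n \<bullet> y \<le> 0) \<and> (\<forall>a\<in>{\<alpha>,\<beta>}. a \<bullet> y \<ge> 0)))"
proof -
  have u: "n1 \<bullet> n1 = 1" "n2 \<bullet> n2 = 1" "n3 \<bullet> n3 = 1" using unit by (simp_all add: dot_square_norm)
  have ca: "\<alpha> = (1 / c) *\<^sub>R (n1 - n2)" using n2 c by simp
  have db: "\<beta> = (1 / d) *\<^sub>R (n2 - n3)" using n3 d by simp
  have p1: "n3 \<bullet> n2 = n3 \<bullet> n1" using n3a n2 by (simp add: inner_diff_right)
  have p2: "n1 \<bullet> n3 = n1 \<bullet> n2" using n1b n3 by (simp add: inner_diff_right)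
  define p where "p = n1 \<bullet> n2"
  have "(n1 - n2) \<bullet> (n1 - n2) > 0" using ne by simp
  then have p1lt: "p < 1" using u by (simp add: p_def inner_diff_left inner_diff_right inner_commute)
  have "(n1 - n2) \<bullet> (n2 - n3) = p - 1"
    using u p1 p2 by (simp add: p_def inner_diff_left inner_diff_right inner_commute)
  then have "\<alpha> \<bullet> \<beta> = (p - 1) / (c * d)" by (simp add: ca db)
  then have "(p - 1) / (c * d) \<le> 0" using obt by simp
  moreover have "\<not> (c * d < 0)"
  proof
    assume "c * d < 0"
    then have "(p - 1) / (c * d) > 0" using p1lt by (intro divide_neg_neg) auto
    then show False using \<open>(p - 1) / (c * d) \<le> 0\<close> by linarith
  qed
  moreover have "c * d \<noteq> 0" using c d by simp
  ultimately have cd: "c * d > 0" by linarith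
  show ?thesis
  proof (cases "c > 0")
    case True
    then have dpos: "d > 0" using cd by (simp add: zero_less_mult_iff)
    let ?G = "{n1, -\<alpha>, -\<beta>}"
    have s2: "n2 \<in> span ?G"
    proof -
      have "n1 + c *\<^sub>R (-\<alpha>) \<in> span ?G" by (intro span_add span_scale span_base) auto
      then show ?thesis using n2 by simp
    qed
    have "n3 \<in> span ?G"
    proof -
      have "n2 + d *\<^sub>R (-\<beta>) \<in> span ?G" by (rule span_add[OF s2], rule span_scale, rule span_base) auto
      then show ?thesis using n3 by simp
    qed
    then have sp: "{n1,n2,n3} \<union> uminus ` {\<alpha>,\<beta>} \<subseteq> span ?G" using s2 by (auto intro: span_base)
    have eq: "(\<forall>g\<in>?G. g \<bullet> y \<le> 0) \<longleftrightarrow> ((\<forall>n\<in>{n1,n2,n3}. n \<bullet> y \<le> 0) \<and> (\<forall>a\<in>{\<alpha>,\<beta>}. a \<bullet> y \<ge> 0))" for y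
    proof -
      have a: "n1 \<bullet> y \<le> 0 \<Longrightarrow> \<alpha> \<bullet> y \<ge> 0 \<Longrightarrow> n2 \<bullet> y \<le> 0"
        using drop_le[OF n2] True by simp
      have b: "n2 \<bullet> y \<le> 0 \<Longrightarrow> \<beta> \<bullet> y \<ge> 0 \<Longrightarrow> n3 \<bullet> y \<le> 0"
        using drop_le[OF n3] dpos by simp
      show ?thesis using a b by auto
    qed
    show ?thesis by (rule exI[of _ ?G], intro conjI allI, simp, rule card3_le, rule sp, rule eq)
  next
    case False
    then have cn: "-c > 0" using c by simp
    then have dn: "-d > 0" using cd by (simp add: zero_less_mult_iff)
    have n2': "n2 = n3 - (-d) *\<^sub>R \<beta>" using n3 by simp
    have n1': "n1 = n2 - (-c) *\<^sub>R \<alpha>" using n2 by simp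
    let ?G = "{n3, -\<alpha>, -\<beta>}"
    have s2: "n2 \<in> span ?G"
    proof -
      have "n3 + (-d) *\<^sub>R (-\<beta>) \<in> span ?G" by (intro span_add span_scale span_base) auto
      then show ?thesis using n2' by simp
    qed
    have "n1 \<in> span ?G"
    proof -
      have "n2 + (-c) *\<^sub>R (-\<alpha>) \<in> span ?G" by (rule span_add[OF s2], rule span_scale, rule span_base) auto
      then show ?thesis using n1' by simp
    qed
    then have sp: "{n1,n2,n3} \<union> uminus ` {\<alpha>,\<beta>} \<subseteq> span ?G" using s2 by (auto intro: span_base)
    have eq: "(\<forall>g\<in>?G. g \<bullet> y \<le> 0) \<longleftrightarrow> ((\<forall>n\<in>{n1,n2,n3}. n \<bullet> y \<le> 0) \<and> (\<forall>a\<in>{\<alpha>,\<beta>}. a \<bullet> y \<ge> 0))" for y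
    proof -
      have a: "n3 \<bullet> y \<le> 0 \<Longrightarrow> \<beta> \<bullet> y \<ge> 0 \<Longrightarrow> n2 \<bullet> y \<le> 0"
        using drop_le[OF n2'] dn by simp
      have b: "n2 \<bullet> y \<le> 0 \<Longrightarrow> \<alpha> \<bullet> y \<ge> 0 \<Longrightarrow> n1 \<bullet> y \<le> 0"
        using drop_le[OF n1'] cn by simp
      show ?thesis using a b by auto
    qed
    show ?thesis by (rule exI[of _ ?G], intro conjI allI, simp, rule card3_le, rule sp, rule eq)
  qed
qed

lemma AL_finish':
  assumes "\<exists>G. finite G \<and> card G \<le> 3 \<and> N \<union> uminus ` J \<subseteq> span G \<and>
    (\<forall>y. (\<forall>g\<in>G. g \<bullet> y \<le> 0) \<longleftrightarrow> ((\<forall>n\<in>N. n \<bullet> y \<le> 0) \<and> (\<forall>a\<in>J. a \<bullet> y \<ge> (0::real))))"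
    "span (N \<union> uminus ` J) = UNIV"
  shows "\<exists>G. finite G \<and> card G \<le> 3 \<and> span G = UNIV \<and>
    (\<forall>y. (\<forall>g\<in>G. g \<bullet> y \<le> 0) \<longleftrightarrow> ((\<forall>n\<in>N. n \<bullet> y \<le> 0) \<and> (\<forall>a\<in>J. a \<bullet> y \<ge> (0::real))))"
proof -
  obtain G where G: "finite G" "card G \<le> 3" "N \<union> uminus ` J \<subseteq> span G"
    "\<forall>y. (\<forall>g\<in>G. g \<bullet> y \<le> 0) \<longleftrightarrow> ((\<forall>n\<in>N. n \<bullet> y \<le> 0) \<and> (\<forall>a\<in>J. a \<bullet> y \<ge> (0::real)))"
    using assms(1) by blast
  show ?thesis by (rule AL_finish[OF G(1,2,3) assms(2) G(4)])
qed

lemma obtain_third: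
  assumes "card N = 3" "n1 \<in> N" "n2 \<in> N" "n1 \<noteq> n2"
  obtains n3 where "N = {n1, n2, n3}" "n3 \<noteq> n1" "n3 \<noteq> n2"
proof -
  have fin: "finite N" using assms(1) by (intro card_ge_0_finite) simp
  have "card (N - {n1, n2}) = 1" using assms fin by (simp add: card_Diff_subset)
  then obtain n3 where n3: "N - {n1, n2} = {n3}" by (rule card_1_singletonE)
  then have "N = {n1, n2, n3}" using assms by auto
  moreover have "n3 \<noteq> n1" "n3 \<noteq> n2" using n3 by auto
  ultimately show ?thesis using that by blast
qed

lemma obtain_second:
  assumes "card N = 2" "n1 \<in> N"
  obtains n2 where "N = {n1, n2}" "n2 \<noteq> n1"
proof -
  have fin: "finite N" using assms(1) by (intro card_ge_0_finite) simp
  have "card (N - {n1}) = 1" using assms fin by simp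
  then obtain n2 where n2: "N - {n1} = {n2}" by (rule card_1_singletonE)
  then have "N = {n1, n2}" using assms by auto
  moreover have "n2 \<noteq> n1" using n2 by auto
  ultimately show ?thesis using that by blast
qed

lemma refl_inj_eq: "a \<noteq> 0 \<Longrightarrow> refl_in a x = refl_in a y \<longleftrightarrow> x = y"
  using inj_eq[OF inj_refl_in] by blast

lemma sum_fixed_zero:
  fixes N J :: "'a::euclidean_space set"
  assumes dim3: "DIM('a) = 3" and indN: "independent N" and indJ: "independent J" and cJ: "card J = 3"
    and inv: "\<forall>a\<in>J. refl_in a ` N = N"
  shows "N = {}"
proof (rule ccontr)
  assume Nne: "N \<noteq> {}"
  have finN: "finite N" using independent_bound[OF indN] by blast
  have J0: "0 \<notin> J" using indJ dependent_zero by blast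
  define u where "u = (\<Sum>n\<in>N. n)"
  have ua: "u \<bullet> a = 0" if a: "a \<in> J" for a
  proof -
    have anz: "a \<noteq> 0" using a J0 by auto
    have "refl_in a u = (\<Sum>n\<in>N. refl_in a n)"
      unfolding u_def by (rule linear_sum[OF linear_refl_in])
    also have "\<dots> = sum id (refl_in a ` N)"
      by (subst sum.reindex) (use inj_refl_in[OF anz] in \<open>auto simp: inj_on_def\<close>)
    also have "\<dots> = u" using inv a by (simp add: u_def)
    finally show ?thesis using refl_in_fix_iff[OF anz] by simp
  qed
  have "UNIV \<subseteq> span J"
    using card_eq_dim[of J UNIV] cJ dim3 indJ independent_bound[OF indJ] by simp
  then have "u \<in> span J" by auto
  then have "orthogonal u u"
    by (rule orthogonal_to_span) (use ua in \<open>auto simp: orthogonal_def\<close>)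
  then have u0: "u = 0" by (simp add: orthogonal_def)
  have h: "\<forall>c. (\<Sum>v\<in>N. c v *\<^sub>R v) = 0 \<longrightarrow> (\<forall>v\<in>N. c v = (0::real))"
    using indN independent_explicit by blast
  have "(\<Sum>v\<in>N. (\<lambda>_. 1::real) v *\<^sub>R v) = 0" using u0 by (simp add: u_def)
  then have "\<forall>v\<in>N. (1::real) = 0"
    using spec[OF h, of "\<lambda>_. 1"] by simp
  then show False using Nne by auto
qed

lemma both_fix_contra:
  fixes N J :: "'a::euclidean_space set"
  assumes dim3: "DIM('a) = 3" and indN: "independent N" and cN: "card N = 2"
    and indJ: "independent J" and cJ: "card J = 2" and perp: "\<forall>a\<in>J. \<forall>n\<in>N. n \<bullet> a = 0"
  shows False
proof -
  let ?O = "{y \<in> UNIV. \<forall>x\<in>span J. orthogonal x y}"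
  have "dim ?O + dim (span J) = dim (UNIV::'a set)"
    by (rule dim_subspace_orthogonal_to_vectors) auto
  moreover have "dim (span J) = 2" using dim_eq_card_independent[OF indJ] cJ by simp
  ultimately have dO: "dim ?O = 1" using dim3 by simp
  have "N \<subseteq> ?O"
  proof
    fix n assume n: "n \<in> N"
    have "orthogonal x n" if x: "x \<in> span J" for x
    proof -
      have "orthogonal n x"
        by (rule orthogonal_to_span[OF x]) (use perp n in \<open>auto simp: orthogonal_def\<close>)
      then show "orthogonal x n" by (simp add: orthogonal_commute)
    qed
    then show "n \<in> ?O" by simp
  qed
  then have "dim N \<le> 1" using dim_subset[of N ?O] dO by simp
  then show False using dim_eq_card_independent[OF indN] cN by simp
qed

lemma not_all_fixed:
  fixes N :: "'a::euclidean_space set"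
  assumes "a \<noteq> 0" "span N = UNIV"
  shows "\<exists>n\<in>N. refl_in a n \<noteq> n"
proof (rule ccontr)
  assume "\<not> ?thesis"
  then have "\<forall>n\<in>N. n \<bullet> a = 0" using refl_in_fix_iff[OF assms(1)] by auto
  moreover have "a \<in> span N" using assms(2) by simp
  ultimately have "orthogonal a a"
    by (intro orthogonal_to_span[of a N a]) (auto simp: orthogonal_def inner_commute)
  then show False using assms(1) by (simp add: orthogonal_def)
qed

lemma inj_neq:
  assumes "a \<noteq> 0" "refl_in a z = y" "x \<noteq> z"
  shows "refl_in a x \<noteq> y"
proof
  assume "refl_in a x = y"
  then have "refl_in a x = refl_in a z" using assms(2) by simp
  then have "x = z" using refl_inj_eq[OF assms(1)] by simp
  then show False using assms(3) by simp
qed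

lemma AL:
  fixes N J :: "'a::euclidean_space set"
  assumes dim3: "DIM('a) = 3"
    and indN: "independent N" and unitN: "\<forall>n\<in>N. norm n = 1"
    and indJ: "independent J"
    and obt: "\<forall>a\<in>J. \<forall>b\<in>J. a \<noteq> b \<longrightarrow> a \<bullet> b \<le> 0"
    and inv: "\<forall>a\<in>J. refl_in a ` N = N"
    and sp: "span (N \<union> uminus ` J) = UNIV"
  shows "\<exists>G. finite G \<and> card G \<le> 3 \<and> span G = UNIV \<and>
    (\<forall>y. (\<forall>g\<in>G. g \<bullet> y \<le> 0) \<longleftrightarrow> ((\<forall>n\<in>N. n \<bullet> y \<le> 0) \<and> (\<forall>a\<in>J. a \<bullet> y \<ge> 0)))"
proof -
  have finN: "finite N" and cN3: "card N \<le> 3" using independent_bound[OF indN] dim3 by auto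
  have finJ: "finite J" and cJ3: "card J \<le> 3" using independent_bound[OF indJ] dim3 by auto
  have J0: "0 \<notin> J" using indJ dependent_zero by blast
  have memN: "refl_in a n \<in> N" if "a \<in> J" "n \<in> N" for a n using inv that by blast
  have "dim (UNIV::'a set) \<le> card (N \<union> uminus ` J)"
    using span_card_ge_dim[of "N \<union> uminus ` J" UNIV] sp finN finJ by auto
  moreover have "card (N \<union> uminus ` J) \<le> card N + card J"
    using card_Un_le[of N "uminus ` J"] card_image_le[OF finJ, of uminus] by linarith
  ultimately have cnt: "3 \<le> card N + card J" using dim3 by simp
  have spanN3: "span N = UNIV" if "card N = 3"
    using card_eq_dim[of N UNIV] that dim3 indN finN by auto
  show ?thesis
  proof (cases "card N + card J \<le> 3")
    case True
    show ?thesis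
    proof (rule AL_finish'[OF _ sp], rule exI[of _ "N \<union> uminus ` J"], intro conjI allI)
      show "finite (N \<union> uminus ` J)" using finN finJ by simp
      show "card (N \<union> uminus ` J) \<le> 3"
        using True card_Un_le[of N "uminus ` J"] card_image_le[OF finJ, of uminus] by linarith
      show "N \<union> uminus ` J \<subseteq> span (N \<union> uminus ` J)" by (rule span_superset)
      fix y :: 'a
      have "(\<forall>g\<in>uminus ` J. g \<bullet> y \<le> 0) \<longleftrightarrow> (\<forall>a\<in>J. 0 \<le> a \<bullet> y)" by auto
      then show "(\<forall>g\<in>N \<union> uminus ` J. g \<bullet> y \<le> 0) = ((\<forall>n\<in>N. n \<bullet> y \<le> 0) \<and> (\<forall>a\<in>J. 0 \<le> a \<bullet> y))"
        by blast
    qed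
  next
    case False
    have cJ3': "card J \<noteq> 3"
    proof
      assume "card J = 3"
      then have "N = {}" using sum_fixed_zero[OF dim3 indN indJ _ inv] by blast
      then show False using False \<open>card J = 3\<close> by simp
    qed
    have cases: "card J = 1 \<or> card J = 2" using False cJ3 cJ3' cN3 by linarith
    have depc: False if "a \<in> J" "b \<in> J" "a \<noteq> b" "c \<noteq> 0" "c' \<noteq> 0" "c *\<^sub>R a = c' *\<^sub>R b" for a b c c'
    proof -
      have "a = (1 / c) *\<^sub>R (c *\<^sub>R a)" using that(4) by simp
      also have "\<dots> = (1 / c) *\<^sub>R (c' *\<^sub>R b)" using that(6) by simp
      also have "\<dots> = (c' / c) *\<^sub>R b" by simp
      finally have "a = (c' / c) *\<^sub>R b" .
      moreover have "b \<in> J - {a}" using that by auto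
      ultimately have "a \<in> span (J - {a})" by (simp add: span_base span_scale)
      then show False using indJ that(1) dependent_def by blast
    qed
    show ?thesis
    proof (cases "card J = 1")
      case True
      then have cN: "card N = 3" using False cN3 by linarith
      obtain \<alpha> where J: "J = {\<alpha>}" using True card_1_singletonE by blast
      have anz: "\<alpha> \<noteq> 0" using J0 J by auto
      obtain n1 where n1: "n1 \<in> N" "refl_in \<alpha> n1 \<noteq> n1"
        using not_all_fixed[OF anz spanN3[OF cN]] by blast
      define n2 where "n2 = refl_in \<alpha> n1"
      have n2N: "n2 \<in> N" using memN J n1 by (simp add: n2_def)
      have n12: "n1 \<noteq> n2" using n1 by (simp add: n2_def)
      obtain c where c: "c \<noteq> 0" "n2 = n1 - c *\<^sub>R \<alpha>"
        using refl_swap[OF anz n2_def[symmetric] n12] by blast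
      obtain n3 where N: "N = {n1, n2, n3}"
        using obtain_third[OF cN n1(1) n2N n12] by blast
      have sp': "span ({n1, n2, n3} \<union> uminus ` {\<alpha>}) = UNIV" using sp N J by simp
      show ?thesis
        unfolding N J by (rule AL_finish'[OF core_J1N3[OF c(2,1)] sp'])
    next
      case False
      then have cJ2: "card J = 2" using cases by simp
      obtain \<alpha> \<beta> where J: "J = {\<alpha>, \<beta>}" "\<alpha> \<noteq> \<beta>" using iffD1[OF card_2_iff cJ2] by blast
      have abJ0: "\<alpha> \<in> J" "\<beta> \<in> J" by (simp_all add: J(1))
      have anz: "\<alpha> \<noteq> 0" "\<beta> \<noteq> 0" using J0 abJ0 by auto
      have ab: "\<alpha> \<bullet> \<beta> \<le> 0" using obt abJ0 J(2) by blast
      have cNc: "card N = 2 \<or> card N = 3" using \<open>\<not> card N + card J \<le> 3\<close> cJ2 cN3 by linarith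
      show ?thesis
      proof (cases "card N = 2")
        case True
        have "\<exists>a\<in>J. \<exists>n\<in>N. refl_in a n \<noteq> n"
        proof (rule ccontr)
          assume nex: "\<not> ?thesis"
          have "\<forall>a\<in>J. \<forall>n\<in>N. n \<bullet> a = 0"
          proof (intro ballI)
            fix a n assume a: "a \<in> J" and n: "n \<in> N"
            have anz0: "a \<noteq> 0" using a J0 by auto
            have "refl_in a n = n" using nex a n by blast
            then show "n \<bullet> a = 0" using refl_in_fix_iff[OF anz0] by simp
          qed
          then show False by (rule both_fix_contra[OF dim3 indN True indJ cJ2])
        qed
        then obtain a n where an: "a \<in> J" "n \<in> N" "refl_in a n \<noteq> n" by blast
        obtain b where Jab: "J = {a, b}" "b \<noteq> a" using obtain_second[OF cJ2 an(1)] by blast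
        have anz': "a \<noteq> 0" using J0 an by auto
        define m where "m = refl_in a n"
        have mN: "m \<in> N" using memN an by (simp add: m_def)
        obtain m' where Nm: "N = {n, m'}" "m' \<noteq> n" using obtain_second[OF True an(2)] by blast
        have nm: "n \<noteq> m" using an(3) by (simp add: m_def)
        have "m = m'" using Nm(1) mN nm by blast
        then have Nnm: "N = {n, m}" using Nm(1) by simp
        obtain c where c: "c \<noteq> 0" "m = n - c *\<^sub>R a"
          using refl_swap[OF anz' m_def[symmetric] nm] by blast
        have sp': "span ({n, m} \<union> uminus ` {a, b}) = UNIV" using sp Nnm Jab by simp
        show ?thesis
          unfolding Nnm Jab by (rule AL_finish'[OF core_J2N2[OF c(2,1)] sp'])
      next
        case False
        then have cN: "card N = 3" using cNc by simp
        let ?sa = "refl_in \<alpha>" and ?sb = "refl_in \<beta>"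
        have injs: "?sa x = ?sa y \<longleftrightarrow> x = y" "?sb x = ?sb y \<longleftrightarrow> x = y" for x y
          by (rule refl_inj_eq[OF anz(1)], rule refl_inj_eq[OF anz(2)])
        have invs: "?sa (?sa x) = x" "?sb (?sb x) = x" for x
          by (rule refl_in_invol[OF anz(1)], rule refl_in_invol[OF anz(2)])
        have abJ: "\<alpha> \<in> J" "\<beta> \<in> J" using J(1) by auto
        have memA: "?sa x \<in> N" "?sb x \<in> N" if "x \<in> N" for x
          by (rule memN[OF abJ(1) that], rule memN[OF abJ(2) that])
        obtain n1 where n1: "n1 \<in> N" "?sa n1 \<noteq> n1"
          using not_all_fixed[OF anz(1) spanN3[OF cN]] by blast
        define n2 where "n2 = ?sa n1"
        have n2N: "n2 \<in> N" using memA n1 by (simp add: n2_def)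
        have n12: "n1 \<noteq> n2" using n1 n2_def by simp
        have sa2: "?sa n2 = n1" using invs by (simp add: n2_def)
        obtain c where c: "c \<noteq> 0" "n2 = n1 - c *\<^sub>R \<alpha>"
          using refl_swap[OF anz(1) n2_def[symmetric] n12] by blast
        obtain n3 where N: "N = {n1, n2, n3}" "n3 \<noteq> n1" "n3 \<noteq> n2"
          using obtain_third[OF cN n1(1) n2N n12] by blast
        have n1N: "n1 \<in> N" and n3N: "n3 \<in> N" using N(1) by auto
        have "?sa n3 \<in> N" by (rule memA(1)[OF n3N])
        moreover have "?sa n3 \<noteq> n2" using injs N(2) by (simp add: n2_def)
        moreover have "?sa n3 \<noteq> n1" using inj_neq[OF anz(1) sa2] N(3) by auto
        ultimately have sa3: "?sa n3 = n3" using N by auto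
        have n3a: "n3 \<bullet> \<alpha> = 0" using sa3 refl_in_fix_iff[OF anz(1)] by simp
        have unit: "norm n1 = 1" "norm n2 = 1" "norm n3 = 1" using unitN N by auto
        have "?sb n3 \<in> N" by (rule memA(2)[OF n3N])
        then have "?sb n3 = n1 \<or> ?sb n3 = n2 \<or> ?sb n3 = n3" using N by auto
        moreover have "?sb n3 \<noteq> n3"
        proof
          assume sb3: "?sb n3 = n3"
          obtain m where m: "m \<in> N" "?sb m \<noteq> m"
            using not_all_fixed[OF anz(2) spanN3[OF cN]] by blast
          have sb1: "?sb n1 = n2"
          proof (cases "m = n1")
            case True
            have "?sb n1 \<in> N" by (rule memA(2)[OF n1N])
            moreover have "?sb n1 \<noteq> n3" using inj_neq[OF anz(2) sb3] N(2) by auto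
            ultimately show ?thesis using N m True by auto
          next
            case False
            then have mn2: "m = n2" using m N sb3 by auto
            have "?sb n2 \<in> N" by (rule memA(2)[OF n2N])
            moreover have "?sb n2 \<noteq> n3" using inj_neq[OF anz(2) sb3] N(3) by auto
            ultimately have "?sb n2 = n1" using N m mn2 by auto
            then show ?thesis using invs(2)[of n2] by simp
          qed
          obtain c' where c': "c' \<noteq> 0" "n2 = n1 - c' *\<^sub>R \<beta>"
            using refl_swap[OF anz(2) sb1 n12] by blast
          have "n1 - c *\<^sub>R \<alpha> = n1 - c' *\<^sub>R \<beta>" using c(2) c'(2) by simp
          then have "c *\<^sub>R \<alpha> = c' *\<^sub>R \<beta>" by simp
          then show False using depc[of \<alpha> \<beta> c c'] J c(1) c'(1) by auto
        qed
        ultimately have "?sb n3 = n1 \<or> ?sb n3 = n2" by blast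
        then show ?thesis
        proof
          assume sb3: "?sb n3 = n2"
          have sb2: "?sb n2 = n3" using sb3 invs(2)[of n3] by simp
          have "?sb n1 \<in> N" by (rule memA(2)[OF n1N])
          moreover have "?sb n1 \<noteq> n3" using inj_neq[OF anz(2) sb2] n12 by auto
          moreover have "?sb n1 \<noteq> n2" using inj_neq[OF anz(2) sb3] N(2) by auto
          ultimately have "?sb n1 = n1" using N by auto
          then have n1b: "n1 \<bullet> \<beta> = 0" using refl_in_fix_iff[OF anz(2)] by simp
          obtain d where d: "d \<noteq> 0" "n3 = n2 - d *\<^sub>R \<beta>"
            using refl_swap[OF anz(2) sb2] N(3) by blast
          have sp': "span ({n1, n2, n3} \<union> uminus ` {\<alpha>, \<beta>}) = UNIV" using sp N J by simp
          show ?thesis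
            unfolding N(1) J(1)
            by (rule AL_finish'[OF core_J2N3[OF c(2,1) d(2,1) n3a n1b unit n12 ab] sp'])
        next
          assume sb3: "?sb n3 = n1"
          have sb1: "?sb n1 = n3" using sb3 invs(2)[of n3] by simp
          have "?sb n2 \<in> N" by (rule memA(2)[OF n2N])
          moreover have "?sb n2 \<noteq> n3" using inj_neq[OF anz(2) sb1] n12 by auto
          moreover have "?sb n2 \<noteq> n1" using inj_neq[OF anz(2) sb3] N(3) by auto
          ultimately have "?sb n2 = n2" using N by auto
          then have n2b: "n2 \<bullet> \<beta> = 0" using refl_in_fix_iff[OF anz(2)] by simp
          obtain c' where c': "c' \<noteq> 0" "n1 = n2 - c' *\<^sub>R \<alpha>"
            using refl_swap[OF anz(1) sa2 n12[symmetric]] by blast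
          obtain d where d: "d \<noteq> 0" "n3 = n1 - d *\<^sub>R \<beta>"
            using refl_swap[OF anz(2) sb1] N(2) by blast
          have Neq: "N = {n2, n1, n3}" using N(1) by auto
          have sp': "span ({n2, n1, n3} \<union> uminus ` {\<alpha>, \<beta>}) = UNIV" using sp Neq J by simp
          show ?thesis
            unfolding Neq J(1)
            by (rule AL_finish'[OF core_J2N3[OF c'(2,1) d(2,1) n3a n2b unit(2,1,3) n12[symmetric] ab] sp'])
        qed
      qed
    qed
  qed
qed

lemma simple_basis:
  fixes R S :: "'a::euclidean_space set"
  assumes rr: "reduced_root_system R" and ss: "simple_system R S"
  shows "finite S \<and> independent S \<and> span S = UNIV \<and> 0 \<notin> S"
proof -
  have SR: "S \<subseteq> R" and indS: "independent S" using ss by (auto simp: simple_system_def)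
  have finR: "finite R" and spR: "span R = UNIV" using rr by (auto simp: reduced_root_system_def)
  have "R \<subseteq> span S"
  proof
    fix b assume "b \<in> R"
    then obtain c where "b = (\<Sum>a\<in>S. c a *\<^sub>R a)" using ss by (auto simp: simple_system_def)
    moreover have "(\<Sum>a\<in>S. c a *\<^sub>R a) \<in> span S"
      by (intro span_sum span_scale span_base)
    ultimately show "b \<in> span S" by simp
  qed
  then have "span R \<subseteq> span S" by (simp add: span_minimal)
  then have "span S = UNIV" using spR by auto
  moreover have "finite S" using SR finR finite_subset by blast
  moreover have "0 \<notin> S" using indS dependent_zero by blast
  ultimately show ?thesis using indS by blast
qed

lemma simple_obtuse:
  fixes R S :: "'a::euclidean_space set"
  assumes rr: "reduced_root_system R" and ss: "simple_system R S"
    and a: "\<alpha> \<in> S" and b: "\<beta> \<in> S" and ne: "\<alpha> \<noteq> \<beta>"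
  shows "\<alpha> \<bullet> \<beta> \<le> 0"
proof (rule ccontr)
  assume pos: "\<not> \<alpha> \<bullet> \<beta> \<le> 0"
  have basis: "finite S" "independent S" "0 \<notin> S" using simple_basis[OF rr ss] by auto
  have SR: "S \<subseteq> R" using ss by (auto simp: simple_system_def)
  have anz: "\<alpha> \<noteq> 0" using a basis by auto
  define k where "k = (2 * (\<beta> \<bullet> \<alpha>)) / (\<alpha> \<bullet> \<alpha>)"
  have kpos: "k > 0" using pos anz by (simp add: k_def inner_commute)
  define \<gamma> where "\<gamma> = refl_in \<alpha> \<beta>"
  have aR: "\<alpha> \<in> R" "\<beta> \<in> R" using SR a b by auto
  have "\<forall>a\<in>R. \<forall>b\<in>R. refl_in a b \<in> R" using rr by (simp add: reduced_root_system_def)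
  then have gR: "\<gamma> \<in> R" using aR by (simp add: \<gamma>_def)
  have geq: "\<gamma> = \<beta> - k *\<^sub>R \<alpha>" by (simp add: \<gamma>_def refl_in_eq k_def)
  obtain c where c: "\<gamma> = (\<Sum>x\<in>S. c x *\<^sub>R x)" "(\<forall>x\<in>S. c x \<ge> 0) \<or> (\<forall>x\<in>S. c x \<le> 0)"
    using ss gR by (auto simp: simple_system_def)
  define d where "d x = (if x = \<beta> then 1 else 0) - k * (if x = \<alpha> then 1 else 0)" for x
  have "(\<Sum>x\<in>S. d x *\<^sub>R x) = (\<Sum>x\<in>S. (if x = \<beta> then x else 0)) - k *\<^sub>R (\<Sum>x\<in>S. (if x = \<alpha> then x else 0))"
    by (simp add: d_def scaleR_left_diff_distrib sum_subtractf scaleR_sum_right if_distrib[of "\<lambda>t. t *\<^sub>R _"] cong: if_cong)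
      (intro sum.cong refl, simp)
  also have "\<dots> = \<beta> - k *\<^sub>R \<alpha>" using a b basis(1) by (simp add: sum.delta')
  finally have dsum: "(\<Sum>x\<in>S. d x *\<^sub>R x) = \<gamma>" using geq by simp
  have "(\<Sum>x\<in>S. (c x - d x) *\<^sub>R x) = 0"
    using c(1) dsum by (simp add: scaleR_left_diff_distrib sum_subtractf)
  moreover have h: "\<forall>u. (\<Sum>x\<in>S. u x *\<^sub>R x) = 0 \<longrightarrow> (\<forall>x\<in>S. u x = (0::real))"
    using basis(2) independent_explicit by blast
  ultimately have "\<forall>x\<in>S. c x - d x = 0" using spec[OF h, of "\<lambda>x. c x - d x"] by simp
  then have "c \<beta> = 1" "c \<alpha> = - k" using a b ne by (auto simp: d_def)
  then show False using c(2) a b kpos by force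
qed

lemma chamber_polyhedron:
  fixes K :: "'a::euclidean_space set"
  assumes "finite K"
  shows "polyhedron (chamber K)"
proof -
  have "chamber K = \<Inter> ((\<lambda>a. {x. a \<bullet> x \<ge> 0}) ` K)"
    by (auto simp: chamber_def inner_commute)
  moreover have "polyhedron (\<Inter> ((\<lambda>a. {x. a \<bullet> x \<ge> 0}) ` K))"
    using assms by (intro polyhedron_Inter) (auto intro: polyhedron_halfspace_ge)
  ultimately show ?thesis by simp
qed

lemma vertex_simple:
  fixes P Q :: "'a::euclidean_space set" and K :: "'a set"
  assumes dim3: "DIM('a) = 3" and polyP: "polytope P" and affP: "aff_dim P = DIM('a)"
    and simpP: "\<And>u. u extreme_point_of P \<Longrightarrow> card {F. F facet_of P \<and> u \<in> F} = 3"
    and Pinv: "\<And>a x. a \<in> K \<Longrightarrow> x \<in> P \<Longrightarrow> refl_in a x \<in> P"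
    and finK: "finite K" and indK: "independent K"
    and obt: "\<forall>a\<in>K. \<forall>b\<in>K. a \<noteq> b \<longrightarrow> a \<bullet> b \<le> 0"
    and Qdef: "Q = P \<inter> chamber K"
    and ext: "v extreme_point_of Q"
  shows "card {F. F facet_of Q \<and> v \<in> F} = 3 \<and> aff_dim Q = 3"
proof -
  have K0: "0 \<notin> K" using indK dependent_zero by blast
  have vQ: "v \<in> Q" using ext by (simp add: extreme_point_of_def)
  then have vP: "v \<in> P" and vC: "\<forall>a\<in>K. v \<bullet> a \<ge> 0" using Qdef by (auto simp: chamber_def)
  define N where "N = nrm P v"
  define J where "J = {a\<in>K. v \<bullet> a = 0}"
  have finJ: "finite J" using finK by (simp add: J_def)
  obtain e1 where e1: "e1 > 0" "\<forall>y\<in>ball v e1. (y \<in> P \<longleftrightarrow> (\<forall>n\<in>N. n \<bullet> (y - v) \<le> 0))"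
    using poly_local[OF polytope_imp_polyhedron[OF polyP] affP vP] unfolding N_def by blast
  have strictK: "v \<bullet> a > 0" if "a \<in> K - J" for a
    using vC that by (force simp: J_def)
  define e2 where "e2 = Min (insert 1 ((\<lambda>a. (v \<bullet> a) / norm a) ` (K - J)))"
  have "(v \<bullet> a) / norm a > 0" if "a \<in> K - J" for a
    using strictK[OF that] that K0 by (intro divide_pos_pos) auto
  then have e2: "e2 > 0" unfolding e2_def using finK by (auto simp: Min_gr_iff)
  have e2le: "e2 \<le> (v \<bullet> a) / norm a" if "a \<in> K - J" for a
    unfolding e2_def using finK that by (intro Min_le) auto
  define e where "e = min e1 e2"
  have e: "e > 0" using e1 e2 by (simp add: e_def)
  have loc: "y \<in> Q \<longleftrightarrow> (\<forall>m\<in>N \<union> uminus ` J. m \<bullet> (y - v) \<le> 0)" if y: "y \<in> ball v e" for y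
  proof -
    have y1: "y \<in> ball v e1" and y2: "dist v y < e2" using y by (auto simp: e_def)
    have nontight: "y \<bullet> a \<ge> 0" if a: "a \<in> K - J" for a
    proof -
      have anz: "a \<noteq> 0" using a K0 by auto
      have "(v - y) \<bullet> a \<le> norm (v - y) * norm a"
        by (rule norm_cauchy_schwarz)
      also have "\<dots> \<le> e2 * norm a"
        using y2 by (intro mult_right_mono) (auto simp: dist_norm)
      also have "\<dots> \<le> v \<bullet> a" using e2le[OF a] anz by (simp add: field_simps)
      finally show ?thesis by (simp add: inner_diff_left)
    qed
    have tight: "y \<bullet> a = - (-a) \<bullet> (y - v)" if "a \<in> J" for a
      using that by (simp add: J_def inner_diff_right inner_commute)
    have "y \<in> Q \<longleftrightarrow> y \<in> P \<and> (\<forall>a\<in>K. y \<bullet> a \<ge> 0)" using Qdef by (simp add: chamber_def)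
    also have "\<dots> \<longleftrightarrow> (\<forall>n\<in>N. n \<bullet> (y - v) \<le> 0) \<and> (\<forall>a\<in>J. (-a) \<bullet> (y - v) \<le> 0)"
    proof -
      have "(\<forall>a\<in>K. y \<bullet> a \<ge> 0) \<longleftrightarrow> (\<forall>a\<in>J. (-a) \<bullet> (y - v) \<le> 0)"
      proof
        assume "\<forall>a\<in>K. y \<bullet> a \<ge> 0"
        then show "\<forall>a\<in>J. (-a) \<bullet> (y - v) \<le> 0" using tight by (auto simp: J_def)
      next
        assume h: "\<forall>a\<in>J. (-a) \<bullet> (y - v) \<le> 0"
        show "\<forall>a\<in>K. y \<bullet> a \<ge> 0"
        proof
          fix a assume a: "a \<in> K"
          show "y \<bullet> a \<ge> 0"
          proof (cases "a \<in> J")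
            case True
            then show ?thesis using h tight[OF True] by force
          next
            case False
            then show ?thesis using nontight a by blast
          qed
        qed
      qed
      then show ?thesis using e1(2) y1 by blast
    qed
    also have "\<dots> \<longleftrightarrow> (\<forall>m\<in>N \<union> uminus ` J. m \<bullet> (y - v) \<le> 0)" by blast
    finally show ?thesis .
  qed
  have spanM: "span (N \<union> uminus ` J) = UNIV"
    by (rule ext_span[OF ext e]) (use loc in blast)
  have indN: "independent N" unfolding N_def by (rule nrm_indep[OF dim3 polyP affP simpP vP])
  have unitN: "\<forall>n\<in>N. norm n = 1" by (simp add: N_def nrm_def)
  have indJ: "independent J" using indK by (rule independent_mono) (auto simp: J_def)
  have obtJ: "\<forall>a\<in>J. \<forall>b\<in>J. a \<noteq> b \<longrightarrow> a \<bullet> b \<le> 0" using obt by (auto simp: J_def)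
  have invJ: "\<forall>a\<in>J. refl_in a ` N = N"
  proof
    fix a assume a: "a \<in> J"
    have aK: "a \<in> K" and va: "v \<bullet> a = 0" using a by (auto simp: J_def)
    have anz: "a \<noteq> 0" using aK K0 by auto
    show "refl_in a ` N = N" unfolding N_def
      by (rule nrm_refl[OF anz _ vP va]) (rule Pinv[OF aK])
  qed
  obtain G where G: "finite G" "card G \<le> 3" "span G = UNIV"
    "\<forall>y. (\<forall>g\<in>G. g \<bullet> y \<le> 0) \<longleftrightarrow> ((\<forall>n\<in>N. n \<bullet> y \<le> 0) \<and> (\<forall>a\<in>J. a \<bullet> y \<ge> 0))"
    using AL[OF dim3 indN unitN indJ obtJ invJ spanM] by blast
  have locG: "y \<in> Q \<longleftrightarrow> (\<forall>g\<in>G. g \<bullet> (y - v) \<le> 0)" if y: "y \<in> ball v e" for y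
  proof -
    have "(\<forall>m\<in>uminus ` J. m \<bullet> (y - v) \<le> 0) \<longleftrightarrow> (\<forall>a\<in>J. a \<bullet> (y - v) \<ge> 0)" by auto
    then have "(\<forall>m\<in>N \<union> uminus ` J. m \<bullet> (y - v) \<le> 0) \<longleftrightarrow> ((\<forall>n\<in>N. n \<bullet> (y - v) \<le> 0) \<and> (\<forall>a\<in>J. a \<bullet> (y - v) \<ge> 0))"
      by blast
    also have "\<dots> \<longleftrightarrow> (\<forall>g\<in>G. g \<bullet> (y - v) \<le> 0)" using G(4) by blast
    finally show ?thesis using loc[OF y] by blast
  qed
  have polyQ: "polytope Q"
    unfolding Qdef by (rule polytope_Int_polyhedron[OF polyP chamber_polyhedron[OF finK]])
  show ?thesis
    by (rule local_three_facets[OF dim3 polytope_imp_polyhedron[OF polyQ] polytope_imp_convex[OF polyQ] vQ e G(1,2,3) locG])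
qed

theorem lemma6p3:
  fixes R S :: "'a::euclidean_space set" and \<Lambda> :: "'a set"
  assumes "DIM('a) = 3"
    and "reduced_root_system R"
    and "simple_system R S"
    and "finite \<Lambda>" and "\<Lambda> \<subseteq> chamber S"
    and "P = convex hull (\<Union>w\<in>refl_group S. w ` \<Lambda>)"
    and "aff_dim P = 3"
    and "simple_polytope3 P"
  shows "\<forall>K\<subseteq>S. simple_polytope3 (P \<inter> chamber K)"
proof (intro allI impI)
  fix K assume KS: "K \<subseteq> S"
  note dim3 = assms(1) and rr = assms(2) and ss = assms(3) and Pdef = assms(6)
  have basis: "finite S" "independent S" "span S = UNIV" "0 \<notin> S"
    using simple_basis[OF rr ss] by auto
  have polyP: "polytope P" and simpP: "\<And>u. u extreme_point_of P \<Longrightarrow> card {F. F facet_of P \<and> u \<in> F} = 3"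
    using assms(8) by (auto simp: simple_polytope3_def)
  have affP: "aff_dim P = DIM('a)" using assms(7) dim3 by simp
  define Orb where "Orb = (\<Union>w\<in>refl_group S. w ` \<Lambda>)"
  have Peq: "P = convex hull Orb" using Pdef by (simp add: Orb_def)
  have Oinv: "refl_in a ` Orb \<subseteq> Orb" if a: "a \<in> S" for a
  proof
    fix y assume "y \<in> refl_in a ` Orb"
    then obtain w x where w: "w \<in> refl_group S" "x \<in> \<Lambda>" "y = refl_in a (w x)"
      by (auto simp: Orb_def)
    have "refl_in a \<circ> w \<in> refl_group S" using w(1) a by (rule refl_group.step)
    moreover have "y \<in> (refl_in a \<circ> w) ` \<Lambda>" using w(2,3) by simp
    ultimately show "y \<in> Orb" unfolding Orb_def by blast
  qed
  have Pinv: "refl_in a x \<in> P" if a: "a \<in> S" and x: "x \<in> P" for a x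
  proof -
    have "refl_in a ` P = convex hull (refl_in a ` Orb)"
      unfolding Peq by (rule convex_hull_linear_image[OF linear_refl_in])
    also have "\<dots> \<subseteq> convex hull Orb" using Oinv[OF a] by (rule hull_mono)
    finally have "refl_in a ` P \<subseteq> P" using Peq by simp
    then show ?thesis using x by blast
  qed
  have finK: "finite K" using KS basis(1) finite_subset by blast
  have indK: "independent K" using basis(2) KS independent_mono by blast
  have obtK: "\<forall>a\<in>K. \<forall>b\<in>K. a \<noteq> b \<longrightarrow> a \<bullet> b \<le> 0"
  proof (intro ballI impI)
    fix a b assume "a \<in> K" "b \<in> K" "a \<noteq> b"
    then show "a \<bullet> b \<le> 0" using KS by (intro simple_obtuse[OF rr ss]) auto
  qed
  define Q where "Q = P \<inter> chamber K"
  have polyQ: "polytope Q"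
    unfolding Q_def by (rule polytope_Int_polyhedron[OF polyP chamber_polyhedron[OF finK]])
  have PinvK: "refl_in a x \<in> P" if "a \<in> K" "x \<in> P" for a x
    using that KS Pinv by blast
  have vs: "card {F. F facet_of Q \<and> v \<in> F} = 3 \<and> aff_dim Q = 3" if "v extreme_point_of Q" for v
    by (rule vertex_simple[OF dim3 polyP affP simpP PinvK finK indK obtK Q_def that])
  have Pne: "P \<noteq> {}"
  proof
    assume "P = {}"
    then show False using assms(7) by simp
  qed
  have "\<Lambda> \<noteq> {}"
  proof
    assume "\<Lambda> = {}"
    then have "Orb = {}" by (simp add: Orb_def)
    then show False using Peq Pne by simp
  qed
  then obtain l where l: "l \<in> \<Lambda>" by blast
  have "id \<in> refl_group S" by (rule refl_group.id)
  moreover have "l \<in> id ` \<Lambda>" using l by simp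
  ultimately have "l \<in> Orb" unfolding Orb_def by blast
  then have lP: "l \<in> P" unfolding Peq by (rule hull_inc)
  have "l \<in> chamber S" using l assms(5) by blast
  then have "l \<in> chamber K" using KS by (auto simp: chamber_def)
  then have "l \<in> Q" using lP by (simp add: Q_def)
  then have "Q \<noteq> {}" by blast
  then obtain v0 where "v0 extreme_point_of Q"
    using extreme_point_exists_convex[OF polytope_imp_compact[OF polyQ] polytope_imp_convex[OF polyQ]] by blast
  then have affQ: "aff_dim Q = 3" using vs by blast
  have "simple_polytope3 Q"
    unfolding simple_polytope3_def
  proof (intro conjI allI impI)
    show "polytope Q" by (rule polyQ)
    show "aff_dim Q = 3" by (rule affQ)
    fix v assume "v extreme_point_of Q"
    then show "card {F. F facet_of Q \<and> v \<in> F} = 3" using vs by blast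
  qed
  then show "simple_polytope3 (P \<inter> chamber K)" by (simp add: Q_def)
qed

end
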